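(* Let $\Delta$ be a positive integer, let $$\delta_{\Delta} = \max \left\{\sin \left(\tfrac{\alpha}{2}\right) \cos \left(\Delta \tfrac{\alpha}{2}\right) : 0 < \alpha < \tfrac{2 \pi}{3 \Delta} \right\},$$ and let $\beta \in \bigcup_{a \in \overline{B}(1, \delta_{\Delta})} \frac{1}{a} \overline{B}(1, \delta_{\Delta})$. Then $Z_{\mathrm{Ising}}(G; \beta) \ne 0$ for every graph $G$ with maximum degree at most $\Delta$.
   Context: Graphs are undirected and may have multiple edges or loops. $Z_{\mathrm{Ising}}(G;\beta)=\sum_{\sigma\colon V\to\{0,1\}}\beta^{m(\sigma)}$ with $m(\sigma)$ the number of monochromatic edges of $G=(V,E)$ under $\sigma$. $\overline{B}(x,r)=\{z\in\mathbb{C}:|z-x|\le r\}$, and $\frac1a\overline{B}(1,\delta)=\{w/a: w\in\overline{B}(1,\delta)\}$. *)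

theory Defs
  imports "HOL-Analysis.Analysis" "HOL-Library.Multiset"
begin

text \<open>A (multi)graph with loops: a finite vertex set V and a finite multiset E of edges,
  each edge given by its two endpoints (orientation is irrelevant).\<close>

definition multigraph :: "'a set \<Rightarrow> ('a \<times> 'a) multiset \<Rightarrow> bool" where
  "multigraph V E \<longleftrightarrow> finite V \<and> (\<forall>e \<in># E. fst e \<in> V \<and> snd e \<in> V)"

definition degree :: "('a \<times> 'a) multiset \<Rightarrow> 'a \<Rightarrow> nat" where
  "degree E v = (\<Sum>e \<in># E. (if fst e = v then 1 else 0) + (if snd e = v then 1 else 0))"

definition max_degree_le :: "'a set \<Rightarrow> ('a \<times> 'a) multiset \<Rightarrow> nat \<Rightarrow> bool" where
  "max_degree_le V E D \<longleftrightarrow> (\<forall>v \<in> V. degree E v \<le> D)"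

definition mono_edges :: "('a \<times> 'a) multiset \<Rightarrow> ('a \<Rightarrow> bool) \<Rightarrow> nat" where
  "mono_edges E \<sigma> = size (filter_mset (\<lambda>e. \<sigma> (fst e) = \<sigma> (snd e)) E)"

text \<open>Ising partition function; spins \<open>{0,1}\<close> are encoded as bool.\<close>
definition Z_Ising :: "'a set \<Rightarrow> ('a \<times> 'a) multiset \<Rightarrow> complex \<Rightarrow> complex" where
  "Z_Ising V E \<beta> = (\<Sum>\<sigma> \<in> (V \<rightarrow>\<^sub>E (UNIV :: bool set)). \<beta> ^ mono_edges E \<sigma>)"

definition delta_Delta :: "nat \<Rightarrow> real" where
  "delta_Delta D = (SUP \<alpha> \<in> {0<..<2 * pi / (3 * real D)}.
      sin (\<alpha> / 2) * cos (real D * \<alpha> / 2))"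

end

theory Submission
  imports Defs
begin

lemma arg_mult_le: "\<bar>Arg (z * w)\<bar> \<le> \<bar>Arg z\<bar> + \<bar>Arg w\<bar>"
proof (cases "z = 0 \<or> w = 0")
  case True then show ?thesis by auto
next
  case False
  then have nz: "z \<noteq> 0" "w \<noteq> 0" by auto
  show ?thesis
  proof (cases "Arg z + Arg w \<in> {-pi<..pi}")
    case True
    then show ?thesis using Arg_times[OF True nz] by simp
  next
    case F: False
    have "\<bar>Arg (z*w)\<bar> \<le> pi" using mpi_less_Arg[of "z*w"] Arg_le_pi[of "z*w"] by auto
    also have "pi \<le> \<bar>Arg z\<bar> + \<bar>Arg w\<bar>" using F by auto
    finally show ?thesis .
  qed
qed

lemma arg_inverse_abs: "\<bar>Arg (inverse z)\<bar> = \<bar>Arg z\<bar>"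
  by (simp add: Arg_inverse)

lemma arg_divide_le: "\<bar>Arg (z / w)\<bar> \<le> \<bar>Arg z\<bar> + \<bar>Arg w\<bar>"
  using arg_mult_le[of z "inverse w"] by (simp add: divide_inverse arg_inverse_abs)

lemma arg_near1:
  assumes "cmod (w - 1) \<le> s" "s < 1"
  shows "\<bar>Arg w\<bar> \<le> arcsin s"
proof -
  have s0: "0 \<le> s" using assms(1) norm_ge_zero order_trans by blast
  have "Re w \<ge> 1 - cmod (w - 1)" using abs_Re_le_cmod[of "w - 1"] by simp
  then have Rew: "Re w > 0" using assms by linarith
  then have wnz: "w \<noteq> 0" by auto
  define t where "t = Arg w"
  define r where "r = cmod w"
  have w: "w = rcis r t" unfolding r_def t_def by (simp add: rcis_cmod_Arg)
  have ht: "\<bar>t\<bar> < pi/2" using Arg_Re_pos[of w] Rew t_def by auto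
  have "(cmod (w - 1))\<^sup>2 = (Re w - 1)\<^sup>2 + (Im w)\<^sup>2" by (simp add: cmod_power2)
  also have "\<dots> = (r * cos t - 1)\<^sup>2 + (r * sin t)\<^sup>2" by (subst (1 2) w) simp
  also have "\<dots> = (r - cos t)\<^sup>2 + (sin t)\<^sup>2"
    by (simp add: power2_eq_square algebra_simps) (metis (no_types, opaque_lifting) add.commute distrib_left mult.right_neutral sin_cos_squared_add power2_eq_square)
  finally have "(sin t)\<^sup>2 \<le> (cmod (w - 1))\<^sup>2" by simp
  also have "\<dots> \<le> s\<^sup>2" using assms(1) by (simp add: power_mono)
  finally have "\<bar>sin t\<bar>\<^sup>2 \<le> s\<^sup>2" by simp
  then have "\<bar>sin t\<bar> \<le> s" using s0 by (rule power2_le_imp_le)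
  moreover have "sin \<bar>t\<bar> \<le> \<bar>sin t\<bar>" by (cases "t < 0") auto
  ultimately have "sin \<bar>t\<bar> \<le> s" by linarith
  moreover have "arcsin (sin \<bar>t\<bar>) = \<bar>t\<bar>" using ht by (intro arcsin_sin) auto
  moreover have "sin \<bar>t\<bar> \<ge> -1" by simp
  ultimately have "\<bar>t\<bar> \<le> arcsin s" using arcsin_le_arcsin[of "sin \<bar>t\<bar>" s] assms(2) by auto
  then show ?thesis by (simp add: t_def)
qed

lemma sum_norm_lower:
  fixes u1 u2 :: complex
  assumes nz: "u1 \<noteq> 0" "u2 \<noteq> 0" and ang: "\<bar>Arg (u1 / u2)\<bar> \<le> \<theta>" and th: "\<theta> \<le> pi"
  shows "cos (\<theta>/2) * (cmod u1 + cmod u2) \<le> cmod (u1 + u2)"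
proof -
  define z where "z = u1 / u2"
  define t where "t = Arg z"
  define r where "r = cmod z"
  define c where "c = cos (\<theta>/2)"
  have th0: "0 \<le> \<theta>" using ang by linarith
  have c0: "0 \<le> c" unfolding c_def by (rule cos_ge_zero) (use th th0 in auto)
  have c1: "c\<^sup>2 \<le> 1" unfolding c_def by (simp add: abs_square_le_1)
  have z: "z = rcis r t" unfolding r_def t_def by (simp add: rcis_cmod_Arg)
  have r0: "0 \<le> r" by (simp add: r_def)
  have "cos \<theta> \<le> cos \<bar>t\<bar>" using ang th by (intro cos_monotone_0_pi_le) (auto simp: t_def z_def)
  then have ct: "cos \<theta> \<le> cos t" by (cases "t < 0") auto
  have cth: "cos \<theta> = 2 * c\<^sup>2 - 1" unfolding c_def using cos_double_cos[of "\<theta>/2"] by simp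
  have "(cmod (1 + z))\<^sup>2 = (Re (1 + z))\<^sup>2 + (Im (1 + z))\<^sup>2" by (rule cmod_power2)
  also have "\<dots> = (1 + r * cos t)\<^sup>2 + (r * sin t)\<^sup>2" by (simp add: z)
  also have "\<dots> = 1 + 2 * r * cos t + r\<^sup>2 * ((sin t)\<^sup>2 + (cos t)\<^sup>2)" by algebra
  also have "\<dots> = 1 + 2 * r * cos t + r\<^sup>2" by simp
  finally have eq: "(cmod (1 + z))\<^sup>2 = 1 + 2 * r * cos t + r\<^sup>2" .
  have "(c * (1 + r))\<^sup>2 = 1 + 2 * r * (2 * c\<^sup>2 - 1) + r\<^sup>2 - (1 - c\<^sup>2) * (r - 1)\<^sup>2"
    by (simp add: power2_eq_square algebra_simps)
  also have "\<dots> \<le> 1 + 2 * r * (2 * c\<^sup>2 - 1) + r\<^sup>2" using c1 by simp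
  also have "\<dots> \<le> 1 + 2 * r * cos t + r\<^sup>2" using ct cth r0 by (simp add: mult_left_mono)
  finally have "(c * (1 + r))\<^sup>2 \<le> (cmod (1 + z))\<^sup>2" using eq by simp
  then have key: "c * (1 + r) \<le> cmod (1 + z)" by (rule power2_le_imp_le) simp
  have "u1 + u2 = u2 * (1 + z)" using nz by (simp add: z_def field_simps)
  then have "cmod (u1 + u2) = cmod u2 * cmod (1 + z)" by (simp add: norm_mult)
  moreover have "cmod u1 = cmod u2 * r" using nz by (simp add: r_def z_def norm_divide)
  ultimately show ?thesis using key mult_left_mono[OF key, of "cmod u2"]
    by (simp add: c_def algebra_simps)
qed

lemma near_vec:
  fixes z U :: complex
  assumes "cmod (z - U) \<le> s * cmod U" "s < 1" "U \<noteq> 0"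
  shows "z \<noteq> 0" "\<bar>Arg (z / U)\<bar> \<le> arcsin s"
proof -
  have "z / U - 1 = (z - U) / U" using assms(3) by (simp add: field_simps)
  then have e: "cmod (z / U - 1) \<le> s" using assms by (simp add: norm_divide divide_le_eq)
  then show "\<bar>Arg (z / U)\<bar> \<le> arcsin s" using assms(2) by (rule arg_near1)
  show "z \<noteq> 0" using e assms(2) by auto
qed

lemma div_div_same: "(U::complex) \<noteq> 0 \<Longrightarrow> x / y = (x / U) / (y / U)"
  by (cases "y = 0") (simp_all add: field_simps)

lemma two_vec:
  fixes u1 u2 a1 a2 b1 b2 :: complex
  assumes nz: "u1 \<noteq> 0" "u2 \<noteq> 0" and ang: "\<bar>Arg (u1 / u2)\<bar> \<le> \<theta>" and th: "\<theta> \<le> pi"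
    and cpos: "cos (\<theta>/2) > 0" and dl: "\<delta> \<le> sin (\<alpha>/2) * cos (\<theta>/2)"
    and al: "0 < \<alpha>" "\<alpha> < pi"
    and a: "cmod (a1 - 1) \<le> \<delta>" "cmod (a2 - 1) \<le> \<delta>"
    and b: "cmod (b1 - 1) \<le> \<delta>" "cmod (b2 - 1) \<le> \<delta>"
  shows "a1 * u1 + a2 * u2 \<noteq> 0" "b1 * u1 + b2 * u2 \<noteq> 0"
        "\<bar>Arg ((a1 * u1 + a2 * u2) / (b1 * u1 + b2 * u2))\<bar> \<le> \<alpha>"
proof -
  define c where "c = cos (\<theta>/2)"
  define U where "U = u1 + u2"
  define s where "s = sin (\<alpha>/2)"
  have d0: "0 \<le> \<delta>" using a(1) norm_ge_zero order_trans by blast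
  have s1: "s < 1" unfolding s_def using al sin_monotone_2pi[of "\<alpha>/2" "pi/2"] by simp
  have low: "c * (cmod u1 + cmod u2) \<le> cmod U" unfolding c_def U_def by (rule sum_norm_lower[OF nz ang th])
  have "0 < c * (cmod u1 + cmod u2)" using cpos nz unfolding c_def by (intro mult_pos_pos add_pos_pos) auto
  then have Unz: "U \<noteq> 0" using low by auto
  have gen: "cmod (x1 * u1 + x2 * u2 - U) \<le> s * cmod U" if "cmod (x1 - 1) \<le> \<delta>" "cmod (x2 - 1) \<le> \<delta>" for x1 x2
  proof -
    have "x1 * u1 + x2 * u2 - U = (x1 - 1) * u1 + (x2 - 1) * u2" by (simp add: U_def algebra_simps)
    then have "cmod (x1 * u1 + x2 * u2 - U) \<le> cmod (x1 - 1) * cmod u1 + cmod (x2 - 1) * cmod u2"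
      by (metis norm_mult norm_triangle_ineq)
    also have "\<dots> \<le> \<delta> * cmod u1 + \<delta> * cmod u2" using that by (intro add_mono mult_right_mono) auto
    also have "\<dots> = (\<delta> / c) * (c * (cmod u1 + cmod u2))" using cpos by (simp add: c_def field_simps)
    also have "\<dots> \<le> (\<delta> / c) * cmod U" using low d0 cpos by (intro mult_left_mono) (auto simp: c_def)
    also have "\<dots> \<le> s * cmod U" using dl cpos by (intro mult_right_mono) (auto simp: c_def s_def divide_le_eq)
    finally show ?thesis .
  qed
  have A: "a1 * u1 + a2 * u2 \<noteq> 0" "\<bar>Arg ((a1 * u1 + a2 * u2) / U)\<bar> \<le> arcsin s"
    using near_vec[OF gen[OF a] s1 Unz] by auto
  have B: "b1 * u1 + b2 * u2 \<noteq> 0" "\<bar>Arg ((b1 * u1 + b2 * u2) / U)\<bar> \<le> arcsin s"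
    using near_vec[OF gen[OF b] s1 Unz] by auto
  show "a1 * u1 + a2 * u2 \<noteq> 0" "b1 * u1 + b2 * u2 \<noteq> 0" using A B by auto
  have as: "arcsin s = \<alpha>/2" unfolding s_def using al by (intro arcsin_sin) auto
  have "(a1 * u1 + a2 * u2) / (b1 * u1 + b2 * u2) = ((a1 * u1 + a2 * u2) / U) / ((b1 * u1 + b2 * u2) / U)"
    using Unz by (rule div_div_same)
  then have "\<bar>Arg ((a1 * u1 + a2 * u2) / (b1 * u1 + b2 * u2))\<bar> = \<bar>Arg (((a1 * u1 + a2 * u2) / U) / ((b1 * u1 + b2 * u2) / U))\<bar>" by (simp only:)
  then show "\<bar>Arg ((a1 * u1 + a2 * u2) / (b1 * u1 + b2 * u2))\<bar> \<le> \<alpha>"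
    using arg_divide_le[of "(a1 * u1 + a2 * u2) / U" "(b1 * u1 + b2 * u2) / U"] A B as by linarith
qed

datatype 'a tm = Fr 'a | Pn bool

fun col :: "('a \<Rightarrow> bool) \<Rightarrow> 'a tm \<Rightarrow> bool" where
  "col \<sigma> (Fr v) = \<sigma> v"
| "col \<sigma> (Pn b) = b"

definition Wt :: "complex \<Rightarrow> complex \<Rightarrow> bool \<Rightarrow> bool \<Rightarrow> complex" where
  "Wt w a c d = (if c = d then w else a)"

definition PF :: "complex \<Rightarrow> complex \<Rightarrow> 'a set \<Rightarrow> ('a tm \<times> 'a tm) multiset \<Rightarrow> complex" where
  "PF w a F Es = (\<Sum>\<sigma> \<in> F \<rightarrow>\<^sub>E (UNIV :: bool set). \<Prod>e\<in>#Es. Wt w a (col \<sigma> (fst e)) (col \<sigma> (snd e)))"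

fun sbt :: "'a \<Rightarrow> bool \<Rightarrow> 'a tm \<Rightarrow> 'a tm" where
  "sbt x b (Fr v) = (if v = x then Pn b else Fr v)"
| "sbt x b (Pn c) = Pn c"

definition pinE :: "'a \<Rightarrow> bool \<Rightarrow> 'a tm \<times> 'a tm \<Rightarrow> 'a tm \<times> 'a tm" where
  "pinE x b = map_prod (sbt x b) (sbt x b)"

definition pin :: "'a \<Rightarrow> bool \<Rightarrow> ('a tm \<times> 'a tm) multiset \<Rightarrow> ('a tm \<times> 'a tm) multiset" where
  "pin x b Es = image_mset (pinE x b) Es"

definition tdeg :: "'a \<Rightarrow> 'a tm \<Rightarrow> nat" where
  "tdeg v t = (if t = Fr v then 1 else 0)"

definition deg :: "'a \<Rightarrow> ('a tm \<times> 'a tm) multiset \<Rightarrow> nat" where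
  "deg v Es = (\<Sum>e\<in>#Es. tdeg v (fst e) + tdeg v (snd e))"

lemma Wt_sym: "Wt w a c d = Wt w a d c"
  by (auto simp: Wt_def)

lemma col_upd: "col (g(x := b)) t = col g (sbt x b t)"
  by (cases t) auto

lemma deg_add_mset[simp]: "deg v (add_mset e M) = tdeg v (fst e) + tdeg v (snd e) + deg v M"
  by (simp add: deg_def)

lemma deg_plus[simp]: "deg v (M + N) = deg v M + deg v N"
  by (simp add: deg_def)

lemma deg_empty[simp]: "deg v {#} = 0"
  by (simp add: deg_def)

lemma tdeg_sbt: "v \<noteq> x \<Longrightarrow> tdeg v (sbt x b t) = tdeg v t"
  by (cases t) (auto simp: tdeg_def)

lemma deg_pin: "v \<noteq> x \<Longrightarrow> deg v (pin x b M) = deg v M"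
  by (induction M) (auto simp: pin_def pinE_def tdeg_sbt)

lemma pin_add_mset[simp]: "pin x b (add_mset e M) = add_mset (pinE x b e) (pin x b M)"
  by (simp add: pin_def)

lemma pin_plus[simp]: "pin x b (M + N) = pin x b M + pin x b N"
  by (simp add: pin_def)

lemma pin_empty[simp]: "pin x b {#} = {#}"
  by (simp add: pin_def)

lemma PF_swap: "PF w a F (add_mset (q, p) M) = PF w a F (add_mset (p, q) M)"
  by (simp add: PF_def Wt_sym)

lemma PF_split:
  assumes "finite F" "x \<in> F"
  shows "PF w a F Es = PF w a (F - {x}) (pin x True Es) + PF w a (F - {x}) (pin x False Es)"
proof -
  define F0 where "F0 = F - {x}"
  have F: "F = insert x F0" "x \<notin> F0" using assms by (auto simp: F0_def)
  define h where "h = (\<lambda>\<sigma>. \<Prod>e\<in>#Es. Wt w a (col \<sigma> (fst e)) (col \<sigma> (snd e)))"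
  have "PF w a F Es = sum h (F \<rightarrow>\<^sub>E (UNIV :: bool set))" by (simp add: PF_def h_def)
  also have "\<dots> = sum h ((\<lambda>(y, g). g(x := y)) ` (UNIV \<times> (F0 \<rightarrow>\<^sub>E (UNIV :: bool set))))"
    by (simp add: F PiE_insert_eq)
  also have "\<dots> = sum (h \<circ> (\<lambda>(y, g). g(x := y))) (UNIV \<times> (F0 \<rightarrow>\<^sub>E (UNIV :: bool set)))"
    by (rule sum.reindex) (use inj_combinator[OF F(2), of "\<lambda>_. UNIV :: bool set"] in simp)
  also have "\<dots> = (\<Sum>y\<in>UNIV. \<Sum>g\<in>F0 \<rightarrow>\<^sub>E (UNIV :: bool set). h (g(x := y)))"
    by (simp add: sum.cartesian_product split_beta)
  also have "\<dots> = (\<Sum>y\<in>UNIV. PF w a F0 (pin x y Es))"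
  proof (rule sum.cong[OF refl])
    fix y show "(\<Sum>g\<in>F0 \<rightarrow>\<^sub>E (UNIV :: bool set). h (g(x := y))) = PF w a F0 (pin x y Es)"
      unfolding PF_def h_def pin_def
      by (intro sum.cong refl) (simp add: multiset.map_comp o_def col_upd pinE_def)
  qed
  also have "\<dots> = PF w a F0 (pin x True Es) + PF w a F0 (pin x False Es)"
    by (simp add: UNIV_bool)
  finally show ?thesis by (simp add: F0_def)
qed

lemma PF_const:
  assumes "\<And>\<sigma>. \<sigma> \<in> F \<rightarrow>\<^sub>E (UNIV :: bool set) \<Longrightarrow> col \<sigma> p = k1 \<and> col \<sigma> q = k2"
  shows "PF w a F (add_mset (p, q) M) = Wt w a k1 k2 * PF w a F M"
  unfolding PF_def sum_distrib_left using assms by (intro sum.cong refl) simp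

lemma col_outside:
  assumes "\<sigma> \<in> F \<rightarrow>\<^sub>E (UNIV :: bool set)" "q \<notin> Fr ` F"
  shows "col \<sigma> q = col (\<lambda>_. undefined) q"
  using assms by (cases q) (auto simp: PiE_def extensional_def)

lemma sbt_other: "p \<noteq> Fr x \<Longrightarrow> sbt x b p = p"
  by (cases p) auto

lemma arg_tri: "(z2::complex) \<noteq> 0 \<Longrightarrow> \<bar>Arg (z1 / z3)\<bar> \<le> \<bar>Arg (z1 / z2)\<bar> + \<bar>Arg (z2 / z3)\<bar>"
proof -
  assume "z2 \<noteq> 0"
  then have "z1 / z3 = (z1 / z2) * (z2 / z3)" by simp
  then show ?thesis using arg_mult_le[of "z1 / z2" "z2 / z3"] by (simp only:)
qed

locale ictx =
  fixes w a :: complex and \<alpha> \<delta> :: real and D :: nat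
  assumes wd: "cmod (w - 1) \<le> \<delta>" and ad: "cmod (a - 1) \<le> \<delta>"
    and al0: "0 < \<alpha>" and Dal: "real D * \<alpha> \<le> 2 * pi / 3" and D0: "D > 0"
    and dl: "\<delta> \<le> sin (\<alpha>/2) * cos ((real D - 1) * \<alpha> / 2)"
begin

definition okd :: "'a set \<Rightarrow> ('a tm \<times> 'a tm) multiset \<Rightarrow> bool" where
  "okd F Es \<longleftrightarrow> (\<forall>v\<in>F. deg v Es \<le> D)"

definition HH :: "'a set \<Rightarrow> bool" where
  "HH F \<longleftrightarrow> (\<forall>Es. okd F Es \<longrightarrow> PF w a F Es \<noteq> 0 \<and>
     (\<forall>c c' q M. Es = add_mset (Pn c, q) M \<longrightarrow>
        \<bar>Arg (PF w a F Es / PF w a F (add_mset (Pn c', q) M))\<bar> \<le> \<alpha>))"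

lemma al_pi: "\<alpha> < pi"
proof -
  have "\<alpha> \<le> real D * \<alpha>" using D0 al0 by simp
  then show ?thesis using Dal pi_gt_zero by linarith
qed

lemma s_lt1: "sin (\<alpha>/2) < 1"
  using al0 al_pi sin_monotone_2pi[of "\<alpha>/2" "pi/2"] by simp

lemma th_facts: "(real D - 1) * \<alpha> \<le> pi" "cos ((real D - 1) * \<alpha> / 2) > 0" "0 \<le> (real D - 1) * \<alpha>"
proof -
  have "(real D - 1) * \<alpha> \<le> real D * \<alpha>" using al0 by (simp add: algebra_simps)
  then have le: "(real D - 1) * \<alpha> \<le> 2 * pi / 3" using Dal by linarith
  then show "(real D - 1) * \<alpha> \<le> pi" using pi_gt_zero by linarith
  show "0 \<le> (real D - 1) * \<alpha>" using D0 al0 by simp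
  then show "cos ((real D - 1) * \<alpha> / 2) > 0" using le pi_gt_zero by (intro cos_gt_zero_pi; linarith)
qed

lemma d_le_s: "\<delta> \<le> sin (\<alpha>/2)"
proof -
  have "sin (\<alpha>/2) \<ge> 0" using al0 al_pi by (intro sin_ge_zero) auto
  then have "sin (\<alpha>/2) * cos ((real D - 1) * \<alpha> / 2) \<le> sin (\<alpha>/2)"
    using mult_left_mono[OF cos_le_one] by (metis mult.right_neutral)
  then show ?thesis using dl by linarith
qed

lemma Wt_near: "cmod (Wt w a c d - 1) \<le> \<delta>"
  using wd ad by (simp add: Wt_def)

lemma Wt_nz: "Wt w a c d \<noteq> 0"
  using Wt_near[of c d] d_le_s s_lt1 by (metis diff_zero norm_minus_commute norm_one not_le order_le_less_trans)

lemma Wt_arg: "\<bar>Arg (Wt w a c d)\<bar> \<le> \<alpha>/2"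
proof -
  have "\<bar>Arg (Wt w a c d)\<bar> \<le> arcsin (sin (\<alpha>/2))"
    using Wt_near[of c d] d_le_s s_lt1 by (intro arg_near1) auto
  also have "\<dots> = \<alpha>/2" using al0 al_pi by (intro arcsin_sin) auto
  finally show ?thesis .
qed

lemma okd_pin: "x \<notin> F \<Longrightarrow> okd F (pin x b Es + M) \<longleftrightarrow> okd F (Es + M)"
  unfolding okd_def by (metis deg_pin deg_plus)

lemma okd_sub: "okd F (Es + M) \<Longrightarrow> okd F Es"
  unfolding okd_def by (metis deg_plus le_add1 order_trans)

lemma okd_swap: "okd F (add_mset (q, p) M) \<longleftrightarrow> okd F (add_mset (p, q) M)"
  unfolding okd_def by (simp add: add_ac)

lemma okd_pinE: assumes "x \<notin> F" shows "okd F (add_mset (pinE x b e) N) \<longleftrightarrow> okd F (add_mset e N)"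
proof -
  have "\<And>v t. v \<in> F \<Longrightarrow> tdeg v (sbt x b t) = tdeg v t" using assms tdeg_sbt by metis
  then show ?thesis unfolding okd_def pinE_def by simp
qed

lemma B_swap:
  assumes "HH F" "okd F (add_mset (q, Pn c) M)"
  shows "\<bar>Arg (PF w a F (add_mset (q, Pn c) M) / PF w a F (add_mset (q, Pn c') M))\<bar> \<le> \<alpha>"
proof -
  have "okd F (add_mset (Pn c, q) M)" using assms(2) okd_swap by blast
  then have "\<bar>Arg (PF w a F (add_mset (Pn c, q) M) / PF w a F (add_mset (Pn c', q) M))\<bar> \<le> \<alpha>"
    using assms(1) unfolding HH_def by blast
  then show ?thesis by (simp add: PF_swap)
qed


lemma HH_nz: "HH F \<Longrightarrow> okd F Es \<Longrightarrow> PF w a F Es \<noteq> 0"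
  unfolding HH_def by blast

lemma HH_B: "HH F \<Longrightarrow> okd F (add_mset (Pn c, q) M) \<Longrightarrow>
  \<bar>Arg (PF w a F (add_mset (Pn c, q) M) / PF w a F (add_mset (Pn c', q) M))\<bar> \<le> \<alpha>"
  unfolding HH_def by blast

lemma okd_pins: "okd F (add_mset (Pn c1, Pn c2) N) \<longleftrightarrow> okd F (add_mset (Pn c3, Pn c4) N)"
  unfolding okd_def by (simp add: tdeg_def)

lemma step_e:
  assumes H: "HH F" and ok: "okd F (add_mset e N)" and x: "x \<notin> F"
  shows "\<bar>Arg (PF w a F (add_mset (pinE x True e) N) / PF w a F (add_mset (pinE x False e) N))\<bar>
     \<le> real (tdeg x (fst e) + tdeg x (snd e)) * \<alpha>"
proof -
  obtain p q where e: "e = (p, q)" by (cases e)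
  have okb: "okd F (add_mset (pinE x b e) N)" for b using okd_pinE[OF x] ok by blast
  consider (n) "p \<noteq> Fr x" "q \<noteq> Fr x" | (l) "p = Fr x" "q \<noteq> Fr x" | (r) "p \<noteq> Fr x" "q = Fr x"
    | (bb) "p = Fr x" "q = Fr x" by blast
  then show ?thesis
  proof cases
    case n
    then have eq: "pinE x True e = pinE x False e" by (simp add: e pinE_def sbt_other)
    have "PF w a F (add_mset (pinE x False e) N) \<noteq> 0" using HH_nz[OF H okb] .
    then show ?thesis using eq al0 by simp
  next
    case l
    then have eq: "pinE x b e = (Pn b, q)" for b by (simp add: e pinE_def sbt_other)
    have "\<bar>Arg (PF w a F (add_mset (Pn True, q) N) / PF w a F (add_mset (Pn False, q) N))\<bar> \<le> \<alpha>"
      using HH_B[OF H] okb[of True] eq by metis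
    then show ?thesis using l e eq by (simp add: tdeg_def)
  next
    case r
    then have eq: "pinE x b e = (p, Pn b)" for b by (simp add: e pinE_def sbt_other)
    have "\<bar>Arg (PF w a F (add_mset (p, Pn True) N) / PF w a F (add_mset (p, Pn False) N))\<bar> \<le> \<alpha>"
      using B_swap[OF H] okb[of True] eq by metis
    then show ?thesis using r e eq by (simp add: tdeg_def)
  next
    case bb
    then have eq: "pinE x b e = (Pn b, Pn b)" for b by (simp add: e pinE_def)
    have ok1: "okd F (add_mset (Pn True, Pn True) N)" using okb[of True] eq by metis
    then have ok2: "okd F (add_mset (Pn False, Pn True) N)" using okd_pins by blast
    have nz: "PF w a F (add_mset (Pn False, Pn True) N) \<noteq> 0" using HH_nz[OF H ok2] .
    have a1: "\<bar>Arg (PF w a F (add_mset (Pn True, Pn True) N) / PF w a F (add_mset (Pn False, Pn True) N))\<bar> \<le> \<alpha>"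
      using HH_B[OF H ok1] .
    have a2: "\<bar>Arg (PF w a F (add_mset (Pn False, Pn True) N) / PF w a F (add_mset (Pn False, Pn False) N))\<bar> \<le> \<alpha>"
      using B_swap[OF H ok2] .
    show ?thesis using arg_tri[OF nz, of "PF w a F (add_mset (Pn True, Pn True) N)" "PF w a F (add_mset (Pn False, Pn False) N)"] a1 a2 bb e eq
      by (simp add: tdeg_def)
  qed
qed

lemma C_lemma:
  assumes H: "HH F" and x: "x \<notin> F"
  shows "okd F (Es + M) \<Longrightarrow>
    \<bar>Arg (PF w a F (pin x True Es + M) / PF w a F (pin x False Es + M))\<bar> \<le> real (deg x Es) * \<alpha>"
proof (induction Es arbitrary: M)
  case empty
  have "PF w a F M \<noteq> 0" using HH_nz[OF H] empty by simp
  then show ?case by simp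
next
  case (add e Es0)
  define e1 where "e1 = pinE x True e"
  define e0 where "e0 = pinE x False e"
  define N where "N = pin x False Es0 + M"
  have ok: "okd F (add_mset e (Es0 + M))" using add.prems by simp
  have ok1: "okd F (Es0 + add_mset e1 M)" using ok okd_pinE[OF x, of True e "Es0 + M"] unfolding e1_def
    by simp
  have IH: "\<bar>Arg (PF w a F (pin x True Es0 + add_mset e1 M) / PF w a F (pin x False Es0 + add_mset e1 M))\<bar>
     \<le> real (deg x Es0) * \<alpha>" using add.IH[OF ok1] .
  then have IH': "\<bar>Arg (PF w a F (add_mset e1 (pin x True Es0 + M)) / PF w a F (add_mset e1 N))\<bar>
     \<le> real (deg x Es0) * \<alpha>" by (simp add: N_def)
  have okN: "okd F (add_mset e N)" using okd_pin[OF x, of False Es0 "add_mset e M"] ok by (simp add: N_def)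
  have st: "\<bar>Arg (PF w a F (add_mset e1 N) / PF w a F (add_mset e0 N))\<bar>
     \<le> real (tdeg x (fst e) + tdeg x (snd e)) * \<alpha>"
    unfolding e1_def e0_def by (rule step_e[OF H okN x])
  have okm: "okd F (add_mset e1 N)" using okN okd_pinE[OF x] unfolding e1_def by blast
  have nz: "PF w a F (add_mset e1 N) \<noteq> 0" using HH_nz[OF H okm] .
  have "\<bar>Arg (PF w a F (add_mset e1 (pin x True Es0 + M)) / PF w a F (add_mset e0 N))\<bar>
     \<le> real (deg x Es0) * \<alpha> + real (tdeg x (fst e) + tdeg x (snd e)) * \<alpha>"
    using arg_tri[OF nz, of "PF w a F (add_mset e1 (pin x True Es0 + M))" "PF w a F (add_mset e0 N)"] IH' st
    by linarith
  then show ?case by (simp add: e1_def e0_def N_def algebra_simps)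
qed


lemma prod_nz: "(\<And>x. f x \<noteq> (0::complex)) \<Longrightarrow> (\<Prod>e\<in>#M. f e) \<noteq> 0"
  by (induction M) auto

lemma okd_mono: "okd F Es \<Longrightarrow> F0 \<subseteq> F \<Longrightarrow> okd F0 Es"
  unfolding okd_def by blast

lemma okd_del: "okd F (add_mset e M) \<Longrightarrow> okd F M"
  unfolding okd_def by (metis add_leE deg_add_mset)

lemma HH_all: "finite F \<Longrightarrow> HH F"
proof (induction "card F" arbitrary: F rule: less_induct)
  case less
  have IH: "HH (F - {x})" if "x \<in> F" for x
  proof -
    have "card F > 0" using less.prems that card_gt_0_iff by blast
    then show ?thesis using less.hyps[of "F - {x}"] less.prems that by simp
  qed
  have A: "PF w a F Es \<noteq> 0" if ok: "okd F Es" for Es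
  proof (cases "F = {}")
    case True
    then show ?thesis using Wt_nz by (auto simp: PF_def)
  next
    case False
    then obtain x where x: "x \<in> F" by blast
    define F0 where "F0 = F - {x}"
    have H0: "HH F0" using IH[OF x] by (simp add: F0_def)
    have xF0: "x \<notin> F0" by (simp add: F0_def)
    have ok0: "okd F0 (Es + {#})" using okd_mono[OF ok] by (simp add: F0_def)
    have okb: "okd F0 (pin x b Es)" for b using okd_pin[OF xF0, of b Es "{#}"] ok0 by simp
    define Z1 where "Z1 = PF w a F0 (pin x True Es)"
    define Z0 where "Z0 = PF w a F0 (pin x False Es)"
    have nz: "Z1 \<noteq> 0" "Z0 \<noteq> 0" unfolding Z1_def Z0_def using HH_nz[OF H0 okb] by auto
    have "\<bar>Arg (Z1 / Z0)\<bar> \<le> real (deg x Es) * \<alpha>"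
      using C_lemma[OF H0 xF0 ok0] by (simp add: Z1_def Z0_def)
    also have "\<dots> \<le> real D * \<alpha>" using ok x al0 by (simp add: okd_def mult_right_mono)
    also have "\<dots> < pi" using Dal pi_gt_zero by linarith
    finally have ang: "\<bar>Arg (Z1 / Z0)\<bar> < pi" .
    have "PF w a F Es = Z1 + Z0" unfolding Z1_def Z0_def F0_def by (rule PF_split[OF less.prems x])
    moreover have "Z1 + Z0 \<noteq> 0"
    proof
      assume "Z1 + Z0 = 0"
      then have "Z1 / Z0 = -1" using nz by (simp add: field_simps add_eq_0_iff)
      moreover have "Arg (-1) = pi" using Arg_of_real[of "-1"] by simp
      ultimately show False using ang by simp
    qed
    ultimately show ?thesis by simp
  qed
  have B: "\<bar>Arg (PF w a F (add_mset (Pn c, q) M) / PF w a F (add_mset (Pn c', q) M))\<bar> \<le> \<alpha>"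
    if ok: "okd F (add_mset (Pn c, q) M)" for c c' q M
  proof (cases "q \<in> Fr ` F")
    case True
    then obtain x where x: "x \<in> F" and q: "q = Fr x" by blast
    define F0 where "F0 = F - {x}"
    have H0: "HH F0" using IH[OF x] by (simp add: F0_def)
    have xF0: "x \<notin> F0" by (simp add: F0_def)
    have okM: "okd F M" using okd_del[OF ok] .
    have ok0: "okd F0 (M + {#})" using okd_mono[OF okM] by (simp add: F0_def)
    have okb: "okd F0 (pin x b M)" for b using okd_pin[OF xF0, of b M "{#}"] ok0 by simp
    define u1 where "u1 = PF w a F0 (pin x True M)"
    define u2 where "u2 = PF w a F0 (pin x False M)"
    have nz: "u1 \<noteq> 0" "u2 \<noteq> 0" unfolding u1_def u2_def using HH_nz[OF H0 okb] by auto
    have "1 + deg x M \<le> D" using ok x q by (auto simp: okd_def tdeg_def)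
    then have dM: "real (deg x M) \<le> real D - 1" by linarith
    have "\<bar>Arg (u1 / u2)\<bar> \<le> real (deg x M) * \<alpha>"
      using C_lemma[OF H0 xF0 ok0] by (simp add: u1_def u2_def)
    also have "\<dots> \<le> (real D - 1) * \<alpha>" using dM al0 by (simp add: mult_right_mono)
    finally have ang: "\<bar>Arg (u1 / u2)\<bar> \<le> (real D - 1) * \<alpha>" .
    have pc: "PF w a F0 (add_mset (Pn c0, Pn b) N') = Wt w a c0 b * PF w a F0 N'" for c0 b N'
      by (rule PF_const) auto
    have expand: "PF w a F (add_mset (Pn c0, q) M) = Wt w a c0 True * u1 + Wt w a c0 False * u2" for c0
    proof -
      have "PF w a F (add_mset (Pn c0, q) M) = PF w a F0 (pin x True (add_mset (Pn c0, q) M)) + PF w a F0 (pin x False (add_mset (Pn c0, q) M))"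
        unfolding F0_def by (rule PF_split[OF less.prems x])
      also have "\<dots> = PF w a F0 (add_mset (Pn c0, Pn True) (pin x True M)) + PF w a F0 (add_mset (Pn c0, Pn False) (pin x False M))"
        by (simp add: q pinE_def)
      also have "\<dots> = Wt w a c0 True * u1 + Wt w a c0 False * u2"
        unfolding u1_def u2_def by (simp add: pc)
      finally show ?thesis .
    qed
    show ?thesis unfolding expand
      by (rule two_vec(3)[OF nz ang th_facts(1) th_facts(2) _ al0 al_pi Wt_near Wt_near Wt_near Wt_near])
         (use dl in \<open>simp add: algebra_simps\<close>)
  next
    case False
    define k where "k = col (\<lambda>_. undefined) q"
    have e: "PF w a F (add_mset (Pn c0, q) M) = Wt w a c0 k * PF w a F M" for c0
      by (rule PF_const) (use col_outside[OF _ False] in \<open>auto simp: k_def\<close>)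
    have nzM: "PF w a F M \<noteq> 0" using A[OF okd_del[OF ok]] .
    have "PF w a F (add_mset (Pn c, q) M) / PF w a F (add_mset (Pn c', q) M) = Wt w a c k / Wt w a c' k"
      unfolding e using nzM by simp
    moreover have "\<bar>Arg (Wt w a c k / Wt w a c' k)\<bar> \<le> \<alpha>"
      using arg_divide_le[of "Wt w a c k" "Wt w a c' k"] Wt_arg[of c k] Wt_arg[of c' k] by linarith
    ultimately show ?thesis by (simp only:)
  qed
  show ?case unfolding HH_def using A B by blast
qed

end

lemma exists_alpha:
  assumes D0: "D > 0"
  shows "\<exists>\<alpha>. 0 < \<alpha> \<and> real D * \<alpha> \<le> 2 * pi / 3 \<and>
           delta_Delta D \<le> sin (\<alpha>/2) * cos ((real D - 1) * \<alpha> / 2)"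
proof -
  define b where "b = 2 * pi / (3 * real D)"
  define g where "g = (\<lambda>x. sin (x/2) * cos ((real D - 1) * x / 2))"
  have b0: "b > 0" using D0 by (simp add: b_def)
  have Db: "real D * b = 2 * pi / 3" using D0 by (simp add: b_def)
  have D1: "real D \<ge> 1" using D0 by simp
  have "continuous_on {0..b} g" unfolding g_def by (intro continuous_intros) auto
  then obtain \<alpha> where al: "\<alpha> \<in> {0..b}" and mx: "\<And>x. x \<in> {0..b} \<Longrightarrow> g x \<le> g \<alpha>"
    using continuous_attains_sup[of "{0..b}" g] b0 by auto
  have bb: "b \<le> real D * b" using D1 b0 by simp
  have gb: "g b > 0"
  proof -
    have s: "sin (b/2) > 0" using b0 bb Db pi_gt_zero by (intro sin_gt_zero) auto
    have "(real D - 1) * b \<le> real D * b" using b0 by (simp add: algebra_simps)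
    moreover have "0 \<le> (real D - 1) * b" using D1 b0 by simp
    ultimately have "cos ((real D - 1) * b / 2) > 0" using Db pi_gt_zero
      by (intro cos_gt_zero_pi; linarith)
    then show ?thesis using s by (simp add: g_def)
  qed
  have "g \<alpha> > 0" using mx[of b] gb b0 by auto
  then have a0: "\<alpha> > 0" using al by (cases "\<alpha> = 0") (auto simp: g_def)
  have "delta_Delta D \<le> g \<alpha>"
    unfolding delta_Delta_def
  proof (rule cSUP_least)
    show "{0<..<2 * pi / (3 * real D)} \<noteq> {}" using b0 by (simp add: b_def)
    fix x assume x: "x \<in> {0<..<2 * pi / (3 * real D)}"
    then have x0: "0 < x" "x < b" by (auto simp: b_def)
    have "real D * x \<le> real D * b" using x0 D1 by simp
    then have Dx: "real D * x / 2 \<le> pi" using Db pi_gt_zero by linarith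
    have "sin (x/2) \<ge> 0" using x0 Dx D1 bb Db pi_gt_zero by (intro sin_ge_zero) auto
    moreover have "cos (real D * x / 2) \<le> cos ((real D - 1) * x / 2)"
      using x0 D1 Dx by (intro cos_monotone_0_pi_le) (auto simp: algebra_simps)
    ultimately have "sin (x/2) * cos (real D * x / 2) \<le> g x" unfolding g_def by (simp add: mult_left_mono)
    also have "\<dots> \<le> g \<alpha>" using mx x0 by auto
    finally show "sin (x/2) * cos (real D * x / 2) \<le> g \<alpha>" .
  qed
  moreover have "real D * \<alpha> \<le> 2 * pi / 3" using al Db D1 by (metis atLeastAtMost_iff mult_left_mono of_nat_0_le_iff)
  ultimately show ?thesis using a0 unfolding g_def by blast
qed

lemma prod_eq_Z:
  assumes "a \<noteq> 0" "\<beta> = w / a"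
  shows "(\<Prod>e\<in>#E. Wt w a (\<sigma> (fst e)) (\<sigma> (snd e))) = a ^ size E * \<beta> ^ mono_edges E \<sigma>"
  using assms by (induction E) (auto simp: mono_edges_def Wt_def)

theorem corollary2p8:
  fixes D :: nat and \<beta> :: complex and V :: "'a set" and E :: "('a \<times> 'a) multiset"
  assumes "D > 0"
    and "\<beta> \<in> (\<Union>a \<in> cball 1 (delta_Delta D). (\<lambda>w. w / a) ` cball 1 (delta_Delta D))"
    and "multigraph V E"
    and "max_degree_le V E D"
  shows "Z_Ising V E \<beta> \<noteq> 0"
proof -
  define \<delta> where "\<delta> = delta_Delta D"
  obtain a w where a: "dist 1 a \<le> \<delta>" and w: "dist 1 w \<le> \<delta>" and bw: "\<beta> = w / a"
    using assms(2) unfolding \<delta>_def by auto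
  obtain \<alpha> where al: "0 < \<alpha>" "real D * \<alpha> \<le> 2 * pi / 3" "\<delta> \<le> sin (\<alpha>/2) * cos ((real D - 1) * \<alpha> / 2)"
    using exists_alpha[OF assms(1)] unfolding \<delta>_def by blast
  have wd: "cmod (w - 1) \<le> \<delta>" using w by (simp add: dist_norm norm_minus_commute)
  have ad: "cmod (a - 1) \<le> \<delta>" using a by (simp add: dist_norm norm_minus_commute)
  interpret ictx w a \<alpha> \<delta> D
    by unfold_locales (use wd ad al assms(1) in auto)
  have fin: "finite V" using assms(3) by (simp add: multigraph_def)
  define Es where "Es = image_mset (map_prod Fr Fr) E"
  have degeq: "deg v Es = degree E v" for v
    by (simp add: Es_def deg_def degree_def multiset.map_comp o_def tdeg_def)
  have "okd V Es" using assms(4) by (simp add: okd_def max_degree_le_def degeq)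
  then have nz: "PF w a V Es \<noteq> 0" using HH_all[OF fin] HH_nz by blast
  have a0: "a \<noteq> 0" using Wt_nz[of True False] by (simp add: Wt_def)
  have "PF w a V Es = (\<Sum>\<sigma> \<in> V \<rightarrow>\<^sub>E (UNIV :: bool set). a ^ size E * \<beta> ^ mono_edges E \<sigma>)"
    unfolding PF_def Es_def
    by (intro sum.cong refl) (simp add: multiset.map_comp o_def prod_eq_Z[OF a0 bw])
  also have "\<dots> = a ^ size E * Z_Ising V E \<beta>" by (simp add: Z_Ising_def sum_distrib_left)
  finally show ?thesis using nz by auto
qed

end
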